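(* Let $M$ be a submonoid of $(\mathbb N_0,+)$. (a) $\mathfrak W_M$ is a bracket pattern category. (b) $\mathfrak W_{\mathbb N_0}=\emptyset$. If $M\neq\mathbb N_0$, then $\mathfrak W_M=\langle\!\langle\mathbb N_0\setminus M\rangle\!\rangle$ if $\mathbb N_0\setminus M$ is finite, and $\mathfrak W_M=\langle\!\langle\{0,\dots,v\}\setminus M\mid v\in\mathbb N,\ \{0,\dots,v\}\setminus M\neq\emptyset\rangle\!\rangle$ if $\mathbb N_0\setminus M$ is infinite. (c) $M=\mathbb N_0\setminus\bigcup_{w\in\mathfrak W_M}A(w)=\mathbb N_0\setminus\bigcup_{w\in\mathfrak W_M}w$.
   Context: $\mathbb N=\{1,2,\dots\}$, $\mathbb N_0=\mathbb N\cup\{0\}$. A bracket pattern is a non-empty finite subset $w\subseteq\mathbb N$; $\|w\|:=\max(w)$. For bracket patterns $w,w'$: superposition $w\cup w'$; for $j\in w$ the projection $\cap_j w:=\{i\in w\mid i\le j\}$; the dual $w^\dagger:=\{\|w\|-i\mid i\in\mathbb N_0,\ i<\|w\|,\ i\notin w\}$. A bracket pattern category is a (possibly empty) set of bracket patterns closed under superposition, duals and projections; $\langle\!\langle\mathfrak W\rangle\!\rangle$ denotes the smallest bracket pattern category containing a set $\mathfrak W$ of bracket patterns, and $\langle\!\langle w\rangle\!\rangle:=\langle\!\langle\{w\}\rangle\!\rangle$. The completion of a bracket pattern $w$ is $A(w):=\{j-i\mid j\in w,\ i\in\mathbb N_0,\ i\notin w,\ i<j\}$. A submonoid of $(\mathbb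 N_0,+)$ is a subset containing $0$ and closed under addition; for such $M$, $\mathfrak W_M:=\{w\mid w\text{ bracket pattern},\ A(w)\subseteq\mathbb N_0\setminus M\}$. *)

theory Defs
  imports Main
begin

definition bracket_pattern :: "nat set \<Rightarrow> bool" where
  "bracket_pattern w \<longleftrightarrow> finite w \<and> w \<noteq> {} \<and> 0 \<notin> w"

definition bp_norm :: "nat set \<Rightarrow> nat" where
  "bp_norm w = Max w"

definition bp_proj :: "nat \<Rightarrow> nat set \<Rightarrow> nat set" where
  "bp_proj j w = {i \<in> w. i \<le> j}"

definition bp_dual :: "nat set \<Rightarrow> nat set" where
  "bp_dual w = {bp_norm w - i | i. i < bp_norm w \<and> i \<notin> w}"

definition bp_category :: "nat set set \<Rightarrow> bool" where
  "bp_category C \<longleftrightarrow>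
     (\<forall>w\<in>C. bracket_pattern w) \<and>
     (\<forall>w\<in>C. \<forall>w'\<in>C. w \<union> w' \<in> C) \<and>
     (\<forall>w\<in>C. bp_dual w \<in> C) \<and>
     (\<forall>w\<in>C. \<forall>j\<in>w. bp_proj j w \<in> C)"

definition bp_gen :: "nat set set \<Rightarrow> nat set set" where
  "bp_gen S = \<Inter>{C. bp_category C \<and> S \<subseteq> C}"

definition completion :: "nat set \<Rightarrow> nat set" where
  "completion w = {j - i | j i. j \<in> w \<and> i \<notin> w \<and> i < j}"

definition submonoid_nat :: "nat set \<Rightarrow> bool" where
  "submonoid_nat M \<longleftrightarrow> 0 \<in> M \<and> (\<forall>a\<in>M. \<forall>b\<in>M. a + b \<in> M)"

definition W_of :: "nat set \<Rightarrow> nat set set" where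
  "W_of M = {w. bracket_pattern w \<and> completion w \<subseteq> UNIV - M}"

end

theory Submission
  imports Defs
begin

lemma bp_sub_compl:
  assumes "bracket_pattern w" shows "w \<subseteq> completion w"
proof
  fix x assume "x \<in> w"
  moreover have "0 \<notin> w" using assms by (simp add: bracket_pattern_def)
  ultimately have "0 < x" by (cases x) auto
  show "x \<in> completion w" unfolding completion_def
    using \<open>x \<in> w\<close> \<open>0 \<notin> w\<close> \<open>0 < x\<close> by force
qed

lemma compl_union: "completion (w \<union> w') \<subseteq> completion w \<union> completion w'"
  unfolding completion_def by blast

lemma compl_proj: "completion (bp_proj j w) \<subseteq> completion w"
  unfolding completion_def bp_proj_def by auto

lemma bp_proj_bp:
  assumes "bracket_pattern w" "j \<in> w" shows "bracket_pattern (bp_proj j w)"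
  using assms unfolding bracket_pattern_def bp_proj_def by auto

lemma max_in:
  assumes "bracket_pattern w" shows "bp_norm w \<in> w"
  using assms unfolding bracket_pattern_def bp_norm_def by auto

lemma max_pos:
  assumes "bracket_pattern w" shows "bp_norm w > 0"
  using max_in[OF assms] assms unfolding bracket_pattern_def
  by (metis gr0I)

lemma dual_bp:
  assumes "bracket_pattern w" shows "bracket_pattern (bp_dual w)"
proof -
  let ?N = "bp_norm w"
  have "0 \<notin> w" using assms by (simp add: bracket_pattern_def)
  have "?N \<in> bp_dual w" unfolding bp_dual_def using max_pos[OF assms] \<open>0 \<notin> w\<close> by force
  moreover have "bp_dual w \<subseteq> {..?N}" unfolding bp_dual_def by auto
  moreover have "0 \<notin> bp_dual w" unfolding bp_dual_def by auto
  ultimately show ?thesis unfolding bracket_pattern_def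
    using finite_subset by blast
qed

lemma compl_dual:
  assumes "bracket_pattern w" shows "completion (bp_dual w) \<subseteq> completion w"
proof
  let ?N = "bp_norm w"
  have Nw: "?N \<in> w" by (rule max_in[OF assms])
  fix x assume "x \<in> completion (bp_dual w)"
  then obtain j' i' where x: "x = j' - i'" "j' \<in> bp_dual w" "i' \<notin> bp_dual w" "i' < j'"
    unfolding completion_def by blast
  then obtain i where i: "j' = ?N - i" "i < ?N" "i \<notin> w" unfolding bp_dual_def by blast
  define k where "k = ?N - i'"
  have ki: "i < k" "k \<le> ?N" using i x(4) unfolding k_def by auto
  have "k \<in> w"
  proof (cases "k = ?N")
    case True then show ?thesis using Nw by simp
  next
    case False
    then have "k < ?N" using ki by simp
    have "i' = ?N - k" using k_def x(4) i by auto
    show ?thesis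
    proof (rule ccontr)
      assume "k \<notin> w"
      then have "i' \<in> bp_dual w" unfolding bp_dual_def using \<open>i' = ?N - k\<close> \<open>k < ?N\<close> by blast
      then show False using x(3) by simp
    qed
  qed
  have "x = k - i" using x(1) i(1) k_def x(4) i ki by auto
  then show "x \<in> completion w" unfolding completion_def using \<open>k \<in> w\<close> i(3) ki(1) by blast
qed

lemma W_cat: "bp_category (W_of M)"
  unfolding bp_category_def W_of_def
proof (intro conjI ballI)
  fix w w' assume a: "w \<in> {w. bracket_pattern w \<and> completion w \<subseteq> UNIV - M}"
    "w' \<in> {w. bracket_pattern w \<and> completion w \<subseteq> UNIV - M}"
  then show "w \<union> w' \<in> {w. bracket_pattern w \<and> completion w \<subseteq> UNIV - M}"
    using compl_union[of w w'] unfolding bracket_pattern_def by auto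
next
  fix w assume a: "w \<in> {w. bracket_pattern w \<and> completion w \<subseteq> UNIV - M}"
  then show "bp_dual w \<in> {w. bracket_pattern w \<and> completion w \<subseteq> UNIV - M}"
    using dual_bp compl_dual by blast
  fix j assume "j \<in> w"
  then show "bp_proj j w \<in> {w. bracket_pattern w \<and> completion w \<subseteq> UNIV - M}"
    using a bp_proj_bp compl_proj by blast
qed auto

lemma gap_W:
  assumes M: "submonoid_nat M" and down: "\<And>i j. i < j \<Longrightarrow> j \<in> T \<Longrightarrow> i \<in> T"
    and fin: "finite (T - M)" and ne: "T - M \<noteq> {}"
  shows "T - M \<in> W_of M"
proof -
  have "0 \<in> M" using M by (simp add: submonoid_nat_def)
  have "completion (T - M) \<subseteq> UNIV - M"
  proof
    fix x assume "x \<in> completion (T - M)"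
    then obtain j i where x: "x = j - i" "j \<in> T - M" "i \<notin> T - M" "i < j"
      unfolding completion_def by blast
    have "i \<in> M" using x down by blast
    have "x \<notin> M"
    proof
      assume "x \<in> M"
      then have "i + x \<in> M" using \<open>i \<in> M\<close> M by (simp add: submonoid_nat_def)
      then show False using x by simp
    qed
    then show "x \<in> UNIV - M" by simp
  qed
  then show ?thesis unfolding W_of_def bracket_pattern_def using fin ne \<open>0 \<in> M\<close> by blast
qed

lemma G_W:
  assumes M: "submonoid_nat M" and "j \<notin> M"
  shows "{0..j} - M \<in> W_of M"
  using assms by (intro gap_W[OF M]) auto

lemma G_dual:
  assumes M: "submonoid_nat M" and "j \<notin> M"
  shows "bp_dual ({0..j} - M) = {j - m | m. m \<in> M \<and> m < j}"
proof -
  have "bp_norm ({0..j} - M) = j" unfolding bp_norm_def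
    using assms by (intro Max_eqI) auto
  then show ?thesis unfolding bp_dual_def by auto
qed

lemma W_decomp:
  assumes M: "submonoid_nat M" and w: "w \<in> W_of M"
  shows "w = (\<Union>j\<in>w. bp_dual ({0..j} - M))"
proof -
  have wG: "w \<inter> M = {}" using w bp_sub_compl unfolding W_of_def by blast
  have A: "\<forall>j\<in>w. bp_dual ({0..j} - M) = {j - m | m. m \<in> M \<and> m < j}"
    using G_dual[OF M] wG by blast
  have B: "{j - m | m. m \<in> M \<and> m < j} \<subseteq> w" if "j \<in> w" for j
  proof
    fix x assume "x \<in> {j - m | m. m \<in> M \<and> m < j}"
    then obtain m where m: "x = j - m" "m \<in> M" "m < j" by blast
    show "x \<in> w"
    proof (rule ccontr)
      assume "x \<notin> w"
      have "x < j" using m \<open>x \<notin> w\<close> that by (cases "m = 0") auto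
      then have "j - x \<in> completion w" unfolding completion_def using that \<open>x \<notin> w\<close>
        by (intro CollectI exI[of _ j] exI[of _ x]) simp
      moreover have "j - x = m" using m by simp
      ultimately show False using w m unfolding W_of_def by blast
    qed
  qed
  have C: "j \<in> {j - m | m. m \<in> M \<and> m < j}" if "j \<in> w" for j
  proof -
    have "0 \<in> M" using M by (simp add: submonoid_nat_def)
    moreover have "0 < j" using that w unfolding W_of_def bracket_pattern_def by (cases j) auto
    ultimately show ?thesis by (intro CollectI exI[of _ 0]) simp
  qed
  have "(\<Union>j\<in>w. bp_dual ({0..j} - M)) = (\<Union>j\<in>w. {j - m | m. m \<in> M \<and> m < j})"
    using A by (intro SUP_cong) auto
  also have "\<dots> = w"
  proof (rule equalityI)
    show "(\<Union>j\<in>w. {j - m | m. m \<in> M \<and> m < j}) \<subseteq> w" using B by (rule UN_least)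
    show "w \<subseteq> (\<Union>j\<in>w. {j - m | m. m \<in> M \<and> m < j})"
    proof
      fix x assume "x \<in> w"
      then show "x \<in> (\<Union>j\<in>w. {j - m | m. m \<in> M \<and> m < j})" using C[OF \<open>x \<in> w\<close>] by (rule UN_I)
    qed
  qed
  finally show ?thesis by simp
qed

lemma cat_Union:
  assumes C: "bp_category C" and "finite F" "F \<noteq> {}" "F \<subseteq> C"
  shows "\<Union>F \<in> C"
  using assms(2-4)
proof (induction F rule: finite_ne_induct)
  case (singleton x) then show ?case by simp
next
  case (insert x F) then show ?case using C unfolding bp_category_def by auto
qed

lemma W_in_cat:
  assumes M: "submonoid_nat M" and w: "w \<in> W_of M" and C: "bp_category C"
    and G: "\<And>j. j \<in> w \<Longrightarrow> {0..j} - M \<in> C"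
  shows "w \<in> C"
proof -
  have fin: "finite w" "w \<noteq> {}" using w unfolding W_of_def bracket_pattern_def by auto
  have "(\<lambda>j. bp_dual ({0..j} - M)) ` w \<subseteq> C"
  proof
    fix x assume "x \<in> (\<lambda>j. bp_dual ({0..j} - M)) ` w"
    then obtain j where "j \<in> w" "x = bp_dual ({0..j} - M)" by blast
    moreover have "\<forall>u\<in>C. bp_dual u \<in> C" using C unfolding bp_category_def by simp
    ultimately show "x \<in> C" using G by simp
  qed
  then have "(\<Union>j\<in>w. bp_dual ({0..j} - M)) \<in> C"
    using cat_Union[OF C] fin by simp
  then show ?thesis using W_decomp[OF M w] by simp
qed

lemma gen_eq:
  assumes M: "submonoid_nat M" and S: "S \<subseteq> W_of M"
    and G: "\<And>C w j. bp_category C \<Longrightarrow> S \<subseteq> C \<Longrightarrow> w \<in> W_of M \<Longrightarrow> j \<in> w \<Longrightarrow> {0..j} - M \<in> C"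
  shows "W_of M = bp_gen S"
proof
  show "bp_gen S \<subseteq> W_of M" unfolding bp_gen_def using W_cat S by blast
  show "W_of M \<subseteq> bp_gen S" unfolding bp_gen_def
    using W_in_cat[OF M] G by blast
qed

theorem lemma7p16:
  fixes M :: "nat set"
  assumes "submonoid_nat M"
  shows "bp_category (W_of M)
    \<and> W_of UNIV = {}
    \<and> (M \<noteq> UNIV \<longrightarrow>
         (finite (UNIV - M) \<longrightarrow> W_of M = bp_gen {UNIV - M})
       \<and> (infinite (UNIV - M) \<longrightarrow>
            W_of M = bp_gen {{0..v} - M | v. v \<ge> 1 \<and> {0..v} - M \<noteq> {}}))
    \<and> M = UNIV - (\<Union>w\<in>W_of M. completion w)
    \<and> M = UNIV - (\<Union>w\<in>W_of M. w)"
proof (intro conjI impI)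
  have M0: "0 \<in> M" using assms by (simp add: submonoid_nat_def)
  have wM: "w \<inter> M = {}" if "w \<in> W_of M" for w
    using that bp_sub_compl unfolding W_of_def by blast
  show "bp_category (W_of M)" by (rule W_cat)
  show "W_of UNIV = {}" unfolding W_of_def bracket_pattern_def using bp_sub_compl
    unfolding bracket_pattern_def by blast
  {
    assume ne: "M \<noteq> UNIV"
    {
      assume fin: "finite (UNIV - M)"
      have GW: "UNIV - M \<in> W_of M" by (rule gap_W[OF assms]) (use fin ne in auto)
      show "W_of M = bp_gen {UNIV - M}"
      proof (rule gen_eq[OF assms])
        show "{UNIV - M} \<subseteq> W_of M" using GW by simp
        fix C w j assume C: "bp_category C" "{UNIV - M} \<subseteq> C" "w \<in> W_of M" "j \<in> w"
        have "j \<in> UNIV - M" using wM[OF C(3)] C(4) by blast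
        then have "bp_proj j (UNIV - M) \<in> C" using C unfolding bp_category_def by blast
        moreover have "bp_proj j (UNIV - M) = {0..j} - M" unfolding bp_proj_def by auto
        ultimately show "{0..j} - M \<in> C" by simp
      qed
    }
    {
      assume inf: "infinite (UNIV - M)"
      show "W_of M = bp_gen {{0..v} - M | v. v \<ge> 1 \<and> {0..v} - M \<noteq> {}}"
      proof (rule gen_eq[OF assms])
        show "{{0..v} - M | v. v \<ge> 1 \<and> {0..v} - M \<noteq> {}} \<subseteq> W_of M"
          by (auto intro!: gap_W[OF assms])
        fix C w j assume C: "bp_category C" "{{0..v} - M | v. v \<ge> 1 \<and> {0..v} - M \<noteq> {}} \<subseteq> C"
          "w \<in> W_of M" "j \<in> w"
        have "j \<notin> M" using wM[OF C(3)] C(4) by blast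
        then have "j \<ge> 1" "j \<in> {0..j} - M" using M0 by (cases j; auto)+
        then show "{0..j} - M \<in> C" using C(2) by blast
      qed
    }
  }
  have mem: "n \<in> {0..n} - M" "{0..n} - M \<in> W_of M" if "n \<notin> M" for n
    using that G_W[OF assms] by auto
  show "M = UNIV - (\<Union>w\<in>W_of M. completion w)"
  proof -
    have "completion w \<inter> M = {}" if "w \<in> W_of M" for w using that unfolding W_of_def by blast
    moreover have "n \<in> (\<Union>w\<in>W_of M. completion w)" if "n \<notin> M" for n
      using mem[OF that] bp_sub_compl unfolding W_of_def by blast
    ultimately show ?thesis by blast
  qed
  show "M = UNIV - (\<Union>w\<in>W_of M. w)"
    using wM mem by blast
qed

end
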